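(* The Banach space $Y$ (the predual of $\mathcal{F}(\mathcal{M})$ described in the context) is almost square: for every finite family $f_1,\dots,f_N\in S_Y$ and every $\varepsilon>0$ there exists $g\in S_Y$ with $\|f_i\pm g\|\le 1+\varepsilon$ for all $i=1,\dots,N$.
   Context: For a pointed metric space $M$, ${\mathrm{Lip}}_0(M)$ is the space of real Lipschitz functions vanishing at the base point, normed by the Lipschitz constant $\|\cdot\|_L$. A function $f$ on a metric space is locally flat if $\lim_{x,y\to z}\frac{f(x)-f(y)}{d(x,y)}=0$ for every $z$. Let $p=(0,0)$, $q=(1,0)$, $S_n=\{(2^{-n}k,2^{-n}):k=0,\dots,2^n\}$ for $n\in\mathbb{N}$, and $\mathcal{M}=\{p,q\}\cup\bigcup_n S_n$ with the metric $d((x_1,y_1),(x_2,y_2))=|x_1-x_2|$ if $y_1=y_2$ and $=|y_1-y_2|+\min\{x_1+x_2,2-(x_1+x_2)\}$ if $y_1\neq y_2$, base point $p$. Let $V=\{(x,y)\in\mathcal{M}:x\in\{0,1\}\}$, $h(x,y)=x$, and $Y=\{f\in{\mathrm{Lip}}_0(\mathcal{M}):\lim_n\|(f-f(q)h)|_{S_n}\|_L=0,\ f|_V\text{ locally flat}\}$ with the Lipschitz norm. *)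

theory Defs
  imports "HOL-Analysis.Analysis"
begin

type_synonym pt = "real \<times> real"

definition pP :: pt where "pP = (0, 0)"
definition qQ :: pt where "qQ = (1, 0)"

definition SS :: "nat \<Rightarrow> pt set" where
  "SS n = {(real k / 2 ^ n, 1 / 2 ^ n) | k. k \<le> 2 ^ n}"

text \<open>The metric space M (natural numbers taken as n >= 1).\<close>
definition MM :: "pt set" where
  "MM = {pP, qQ} \<union> (\<Union>n\<in>{1..}. SS n)"

definition dM :: "pt \<Rightarrow> pt \<Rightarrow> real" where
  "dM a b = (if snd a = snd b then \<bar>fst a - fst b\<bar>
             else \<bar>snd a - snd b\<bar> + min (fst a + fst b) (2 - (fst a + fst b)))"

definition lipc :: "pt set \<Rightarrow> (pt \<Rightarrow> real) \<Rightarrow> real" where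
  "lipc A f = (SUP z\<in>{(x, y). x \<in> A \<and> y \<in> A \<and> x \<noteq> y}.
                  \<bar>f (fst z) - f (snd z)\<bar> / dM (fst z) (snd z))"

definition Lip0 :: "(pt \<Rightarrow> real) set" where
  "Lip0 = {f. f pP = 0 \<and> (\<forall>z. z \<notin> MM \<longrightarrow> f z = 0) \<and>
             (\<exists>L. \<forall>x\<in>MM. \<forall>y\<in>MM. \<bar>f x - f y\<bar> \<le> L * dM x y)}"

definition VV :: "pt set" where
  "VV = {z \<in> MM. fst z = 0 \<or> fst z = 1}"

definition hh :: "pt \<Rightarrow> real" where "hh z = fst z"

definition locally_flat_on :: "pt set \<Rightarrow> (pt \<Rightarrow> real) \<Rightarrow> bool" where
  "locally_flat_on A f \<longleftrightarrow> (\<forall>z\<in>A. \<forall>e>0. \<exists>\<delta>>0. \<forall>x\<in>A. \<forall>y\<in>A.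
      x \<noteq> y \<and> dM x z < \<delta> \<and> dM y z < \<delta> \<longrightarrow> \<bar>f x - f y\<bar> \<le> e * dM x y)"

definition YY :: "(pt \<Rightarrow> real) set" where
  "YY = {f \<in> Lip0. (\<lambda>n. lipc (SS n) (\<lambda>z. f z - f qQ * hh z)) \<longlonglongrightarrow> 0
                 \<and> locally_flat_on VV f}"

definition almost_square :: "('a \<Rightarrow> real) set \<Rightarrow> (('a \<Rightarrow> real) \<Rightarrow> real) \<Rightarrow> bool" where
  "almost_square X nrm \<longleftrightarrow> (\<forall>F. finite F \<and> F \<subseteq> {f \<in> X. nrm f = 1} \<longrightarrow>
      (\<forall>\<epsilon>>0. \<exists>g\<in>X. nrm g = 1 \<and>
          (\<forall>f\<in>F. nrm (\<lambda>z. f z + g z) \<le> 1 + \<epsilon> \<and> nrm (\<lambda>z. f z - g z) \<le> 1 + \<epsilon>)))"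

end

theory Submission
  imports Defs
begin


lemma MM_cases:
  assumes "z \<in> MM"
  obtains "z = pP" | "z = qQ" | m k where "m \<ge> 1" "k \<le> 2^m" "z = (real k / 2^m, 1/2^m)"
  using assms unfolding MM_def SS_def by auto

lemma MM_coords:
  assumes "z \<in> MM" shows "0 \<le> fst z" "fst z \<le> 1" "0 \<le> snd z"
proof -
  have "0 \<le> fst z \<and> fst z \<le> 1 \<and> 0 \<le> snd z"
  proof (cases rule: MM_cases[OF assms])
    case (3 m k)
    have "real k \<le> real (2^m)" using 3(2) by (simp only: of_nat_le_iff)
    then have "real k \<le> 2^m" by simp
    then show ?thesis using 3 by (simp add: field_simps)
  qed (auto simp: pP_def qQ_def)
  then show "0 \<le> fst z" "fst z \<le> 1" "0 \<le> snd z" by auto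
qed

lemma dM_sym: "dM a b = dM b a"
  unfolding dM_def by (auto simp: abs_minus_commute add.commute)

lemma dM_ge_snd: assumes "a \<in> MM" "b \<in> MM" shows "\<bar>snd a - snd b\<bar> \<le> dM a b"
  using MM_coords[OF assms(1)] MM_coords[OF assms(2)] unfolding dM_def by auto

lemma dM_nonneg: assumes "a \<in> MM" "b \<in> MM" shows "0 \<le> dM a b"
  using dM_ge_snd[OF assms] by linarith

lemma dM_pos: assumes "a \<in> MM" "b \<in> MM" "a \<noteq> b" shows "0 < dM a b"
proof (cases "snd a = snd b")
  case True
  then have "fst a \<noteq> fst b" using assms(3) by (simp add: prod_eq_iff)
  then show ?thesis using True unfolding dM_def by auto
next
  case False
  then have "0 < \<bar>snd a - snd b\<bar>" by auto
  then show ?thesis using dM_ge_snd[OF assms(1,2)] by linarith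
qed

lemma lipc_le:
  assumes "A \<subseteq> MM" "a \<in> A" "b \<in> A" "a \<noteq> b"
    and "\<And>x y. x\<in>A \<Longrightarrow> y\<in>A \<Longrightarrow> \<bar>f x - f y\<bar> \<le> L * dM x y"
  shows "lipc A f \<le> L"
  unfolding lipc_def
proof (rule cSUP_least)
  have "(a,b) \<in> {(x, y). x \<in> A \<and> y \<in> A \<and> x \<noteq> y}" using assms(2-4) by simp
  then show "{(x, y). x \<in> A \<and> y \<in> A \<and> x \<noteq> y} \<noteq> {}" by blast
next
  fix z assume "z \<in> {(x, y). x \<in> A \<and> y \<in> A \<and> x \<noteq> y}"
  then obtain x y where z: "z = (x,y)" "x \<in> A" "y \<in> A" "x \<noteq> y" by auto
  have "x \<in> MM" "y \<in> MM" using z assms(1) by auto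
  then have "0 < dM x y" using dM_pos z(4) by auto
  then show "\<bar>f (fst z) - f (snd z)\<bar> / dM (fst z) (snd z) \<le> L"
    using assms(5)[OF z(2,3)] z(1) by (simp add: pos_divide_le_eq)
qed

lemma lipc_ge:
  assumes "A \<subseteq> MM" "x\<in>A" "y\<in>A" "x\<noteq>y"
   and "\<And>x y. x\<in>A \<Longrightarrow> y\<in>A \<Longrightarrow> \<bar>f x - f y\<bar> \<le> L * dM x y"
  shows "\<bar>f x - f y\<bar> / dM x y \<le> lipc A f"
  unfolding lipc_def
proof -
  have "(\<lambda>z. \<bar>f (fst z) - f (snd z)\<bar> / dM (fst z) (snd z)) (x,y)
     \<le> (SUP z\<in>{(x, y). x \<in> A \<and> y \<in> A \<and> x \<noteq> y}. \<bar>f (fst z) - f (snd z)\<bar> / dM (fst z) (snd z))"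
  proof (rule cSUP_upper)
    show "(x, y) \<in> {(x, y). x \<in> A \<and> y \<in> A \<and> x \<noteq> y}" using assms by auto
    show "bdd_above ((\<lambda>z. \<bar>f (fst z) - f (snd z)\<bar> / dM (fst z) (snd z)) ` {(x, y). x \<in> A \<and> y \<in> A \<and> x \<noteq> y})"
    proof (rule bdd_aboveI2)
      fix z assume "z \<in> {(x, y). x \<in> A \<and> y \<in> A \<and> x \<noteq> y}"
      then obtain a b where z: "z = (a,b)" "a \<in> A" "b \<in> A" "a \<noteq> b" by auto
      have "a \<in> MM" "b \<in> MM" using z assms(1) by auto
      then have "0 < dM a b" using dM_pos z(4) by auto
      then show "\<bar>f (fst z) - f (snd z)\<bar> / dM (fst z) (snd z) \<le> L"
        using assms(5)[OF z(2,3)] z(1) by (simp add: pos_divide_le_eq)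
    qed
  qed
  then show "\<bar>f x - f y\<bar> / dM x y \<le> (SUP z\<in>{(x, y). x \<in> A \<and> y \<in> A \<and> x \<noteq> y}. \<bar>f (fst z) - f (snd z)\<bar> / dM (fst z) (snd z))"
    by simp
qed

lemma norm1_bound:
  assumes "f \<in> Lip0" "lipc MM f = 1" "x \<in> MM" "y \<in> MM"
  shows "\<bar>f x - f y\<bar> \<le> dM x y"
proof (cases "x = y")
  case True then show ?thesis by (simp add: dM_def)
next
  case False
  obtain L where L: "\<forall>x\<in>MM. \<forall>y\<in>MM. \<bar>f x - f y\<bar> \<le> L * dM x y" using assms(1) unfolding Lip0_def by auto
  have "\<bar>f x - f y\<bar> / dM x y \<le> 1" using lipc_ge[of MM x y f L] L assms False by auto
  moreover have "0 < dM x y" using dM_pos assms False by auto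
  ultimately show ?thesis by (simp add: pos_divide_le_eq)
qed

lemma level_gap:
  assumes "v \<in> MM" "n \<ge> 1" "snd v \<noteq> 1/2^n"
  shows "1/2^(n+1) \<le> \<bar>1/2^n - snd v\<bar>"
proof (cases rule: MM_cases[OF assms(1)])
  case 1 then show ?thesis by (simp add: pP_def divide_simps)
next
  case 2 then show ?thesis by (simp add: qQ_def divide_simps)
next
  case (3 m k)
  then have sv: "snd v = 1/2^m" by simp
  then have "m \<noteq> n" using assms(3) by auto
  then consider "m < n" | "n < m" by linarith
  then show ?thesis
  proof cases
    case 1
    then have "(2::real)^(m+1) \<le> 2^n" by (intro power_increasing) auto
    then have c: "2/2^n \<le> (1::real)/2^m" by (simp add: field_simps)
    have a: "(2::real)/2^n = 2*(1/2^n)" by simp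
    have b: "1/2^(n+1) \<le> (1::real)/2^n" by (simp add: divide_simps)
    show ?thesis using sv a b c abs_ge_minus_self[of "1/2^n - snd v"] by linarith
  next
    case 2
    then have "(2::real)^(n+1) \<le> 2^m" by (intro power_increasing) auto
    then have c: "1/2^m \<le> (1::real)/2^(n+1)" by (simp add: field_simps)
    have a: "(1::real)/2^n = 2*(1/2^(n+1))" by simp
    show ?thesis using sv a c abs_ge_self[of "1/2^n - snd v"] by linarith
  qed
qed



definition gfun :: "real \<Rightarrow> real \<Rightarrow> pt \<Rightarrow> real" where
  "gfun ee ss z = (if z \<in> MM \<and> snd z = 2 * ss then max 0 (ss - ee * fst z) else 0)"

lemma two_s: "2 * (1/2^(n+1)) = (1::real)/2^n" by simp

lemma main_pair:
  fixes f :: "pt \<Rightarrow> real" and n :: nat and E s \<delta> \<sigma> :: real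
  assumes n: "n \<ge> 1" and s: "s = 1/2^(n+1)" and E: "0 < E" "E \<le> 1"
    and sE: "s / E \<le> 1/2" and sd: "2 * s + s/E < \<delta>"
    and f1: "\<And>x y. x\<in>MM \<Longrightarrow> y\<in>MM \<Longrightarrow> \<bar>f x - f y\<bar> \<le> dM x y"
    and flat: "\<forall>x\<in>VV. \<forall>y\<in>VV. x\<noteq>y \<and> dM x pP < \<delta> \<and> dM y pP < \<delta> \<longrightarrow> \<bar>f x - f y\<bar> \<le> E * dM x y"
    and sig: "\<bar>\<sigma>\<bar> \<le> 1"
    and u: "u \<in> MM" "snd u = 2 * s" and v: "v \<in> MM" "snd v \<noteq> 2 * s"
  shows "\<bar>(f u - f v) + \<sigma> * (gfun E s u - gfun E s v)\<bar> \<le> (1+E) * dM u v"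
proof -
  define g where "g = gfun E s"
  have gv: "g v = 0" using v unfolding g_def gfun_def by auto
  have gu: "g u = max 0 (s - E * fst u)" using u unfolding g_def gfun_def by auto
  have spos: "0 < s" using s by simp
  have gu0: "0 \<le> g u" "g u \<le> s" using gu E MM_coords[OF u(1)] spos by (auto simp: mult_nonneg_nonneg)
  have twos: "2 * s = 1/2^n" using s by simp
  have gap: "s \<le> \<bar>2 * s - snd v\<bar>" using level_gap[OF v(1) n] v(2) twos s by simp
  define d where "d = dM u v"
  have dge: "\<bar>2 * s - snd v\<bar> \<le> d" using dM_ge_snd[OF u(1) v(1)] u(2) d_def by simp
  have fuv: "\<bar>f u - f v\<bar> \<le> d" using f1[OF u(1) v(1)] d_def by simp
  have sg: "\<bar>\<sigma> * (g u - g v)\<bar> \<le> g u"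
  proof -
    have "\<bar>\<sigma> * (g u - g v)\<bar> = \<bar>\<sigma>\<bar> * g u" using gv gu0 by (simp add: abs_mult)
    also have "\<dots> \<le> 1 * g u" using sig gu0 by (intro mult_right_mono) auto
    finally show ?thesis by simp
  qed
  have main: "\<bar>f u - f v\<bar> + g u \<le> (1+E) * d"
  proof (cases "g u = 0")
    case True then show ?thesis using fuv E dge gap spos by (simp add: algebra_simps) (smt (verit) mult_nonneg_nonneg)
  next
    case gpos: False
    show ?thesis
    proof (cases "s/E \<le> d")
      case True
      then have "s \<le> E * d" using E by (simp add: divide_le_eq mult.commute)
      then show ?thesis using fuv gu0 by (simp add: algebra_simps)
    next
      case False
      then have dlt: "d < s/E" by simp
      have "E * fst u < s" using gpos gu by auto
      then have xu: "fst u < s/E" using E by (simp add: less_divide_eq mult.commute)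
      have cu: "0 \<le> fst u" "fst u \<le> 1" using MM_coords[OF u(1)] by auto
      have cv: "0 \<le> fst v" "fst v \<le> 1" "0 \<le> snd v" using MM_coords[OF v(1)] by auto
      have dd: "d = \<bar>snd u - snd v\<bar> + min (fst u + fst v) (2 - (fst u + fst v))"
        unfolding d_def dM_def using u(2) v(2) by auto
      have mn: "min (fst u + fst v) (2 - (fst u + fst v)) = fst u + fst v"
      proof -
        have b: "d < 2 - (fst u + fst v)" using dlt xu sE cv cu by linarith
        have "0 \<le> \<bar>snd u - snd v\<bar>" by simp
        note nn = this
        have "fst u + fst v \<le> 2 - (fst u + fst v)"
        proof (rule ccontr)
          assume "\<not> fst u + fst v \<le> 2 - (fst u + fst v)"
          then have "min (fst u + fst v) (2 - (fst u + fst v)) = 2 - (fst u + fst v)" by simp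
          then show False using dd b nn by linarith
        qed
        then show ?thesis by simp
      qed
      have d2: "d = \<bar>2 * s - snd v\<bar> + fst u + fst v" using dd mn u(2) by simp
      have xv: "fst v < 1" using d2 dlt sE gap spos cu cv by linarith
      define u0 where "u0 = (0::real, 2 * s)"
      define v0 where "v0 = (0::real, snd v)"
      have u0M: "u0 \<in> MM" unfolding u0_def MM_def SS_def using n twos
        by (auto intro!: bexI[of _ n] exI[of _ 0])
      have v0M: "v0 \<in> MM"
      proof (cases rule: MM_cases[OF v(1)])
        case 1 then show ?thesis unfolding v0_def MM_def by (simp add: pP_def)
      next
        case 2 then show ?thesis using xv by (simp add: qQ_def)
      next
        case (3 m k) then show ?thesis unfolding v0_def MM_def SS_def
          by (auto intro!: bexI[of _ m] exI[of _ 0])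
      qed
      have u0V: "u0 \<in> VV" using u0M unfolding VV_def u0_def by simp
      have v0V: "v0 \<in> VV" using v0M unfolding VV_def v0_def by simp
      have neq: "u0 \<noteq> v0" using v(2) unfolding u0_def v0_def by simp
      have du0p: "dM u0 pP = 2 * s" unfolding dM_def u0_def pP_def using spos by simp
      have dv0p: "dM v0 pP \<le> snd v" unfolding dM_def v0_def pP_def using cv by auto
      have sv_le: "snd v \<le> 2 * s + d" using dge by linarith
      have "dM u0 pP < \<delta>" using du0p sd spos E by (smt (verit) divide_pos_pos)
      moreover have "dM v0 pP < \<delta>" using dv0p sv_le dlt sd by linarith
      ultimately have f0: "\<bar>f u0 - f v0\<bar> \<le> E * dM u0 v0" using flat u0V v0V neq by blast
      have du0v0: "dM u0 v0 = \<bar>2 * s - snd v\<bar>" unfolding dM_def u0_def v0_def using v(2) by simp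
      have f_u: "\<bar>f u - f u0\<bar> \<le> fst u"
        using f1[OF u(1) u0M] cu u(2) unfolding dM_def u0_def by simp
      have f_v: "\<bar>f v - f v0\<bar> \<le> fst v"
        using f1[OF v(1) v0M] cv unfolding dM_def v0_def by simp
      have "\<bar>f u - f v\<bar> \<le> fst u + fst v + E * \<bar>2 * s - snd v\<bar>"
      proof -
        have f0': "\<bar>f u0 - f v0\<bar> \<le> E * \<bar>2 * s - snd v\<bar>" using f0 du0v0 by simp
        show ?thesis using f_u f_v f0' unfolding abs_le_iff by linarith
      qed
      moreover have "0 \<le> E * fst u" "0 \<le> E * fst v" using E cu cv by auto
      ultimately show ?thesis using d2 gu0 gap E by (simp add: algebra_simps)
    qed
  qed
  show ?thesis using main sg unfolding g_def d_def by linarith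
qed



lemma max0_lip: "\<bar>max 0 (a::real) - max 0 b\<bar> \<le> \<bar>a - b\<bar>"
  by (auto simp: max_def)

lemma g_same_level:
  assumes E: "0 < E" and u: "u \<in> MM" and v: "v \<in> MM" and eq: "snd u = snd v"
  shows "\<bar>gfun E s u - gfun E s v\<bar> \<le> E * \<bar>fst u - fst v\<bar>"
proof (cases "snd u = 2 * s")
  case True
  then have "\<bar>gfun E s u - gfun E s v\<bar> = \<bar>max 0 (s - E * fst u) - max 0 (s - E * fst v)\<bar>"
    using u v eq unfolding gfun_def by simp
  also have "\<dots> \<le> \<bar>(s - E * fst u) - (s - E * fst v)\<bar>" by (rule max0_lip)
  also have "\<dots> = \<bar>E * (fst v - fst u)\<bar>" by (simp add: algebra_simps)
  also have "\<dots> = E * \<bar>fst u - fst v\<bar>" using E by (simp add: abs_mult abs_minus_commute)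
  finally show ?thesis .
next
  case False
  then show ?thesis using eq E unfolding gfun_def by simp
qed

lemma dM_same: "snd u = snd v \<Longrightarrow> dM u v = \<bar>fst u - fst v\<bar>"
  unfolding dM_def by simp

lemma all_pairs:
  fixes f :: "pt \<Rightarrow> real" and n :: nat and E s \<delta> \<sigma> :: real
  assumes n: "n \<ge> 1" and s: "s = 1/2^(n+1)" and E: "0 < E" "E \<le> 1"
    and sE: "s / E \<le> 1/2" and sd: "2 * s + s/E < \<delta>"
    and f1: "\<And>x y. x\<in>MM \<Longrightarrow> y\<in>MM \<Longrightarrow> \<bar>f x - f y\<bar> \<le> dM x y"
    and flat: "\<forall>x\<in>VV. \<forall>y\<in>VV. x\<noteq>y \<and> dM x pP < \<delta> \<and> dM y pP < \<delta> \<longrightarrow> \<bar>f x - f y\<bar> \<le> E * dM x y"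
    and sig: "\<bar>\<sigma>\<bar> \<le> 1"
    and u: "u \<in> MM" and v: "v \<in> MM"
  shows "\<bar>(f u - f v) + \<sigma> * (gfun E s u - gfun E s v)\<bar> \<le> (1+E) * dM u v"
proof -
  have sg: "\<bar>\<sigma> * a\<bar> \<le> \<bar>a\<bar>" for a
  proof -
    have "\<bar>\<sigma> * a\<bar> = \<bar>\<sigma>\<bar> * \<bar>a\<bar>" by (simp add: abs_mult)
    also have "\<dots> \<le> 1 * \<bar>a\<bar>" using sig by (intro mult_right_mono) auto
    finally show ?thesis by simp
  qed
  have dn: "0 \<le> dM u v" using dM_nonneg[OF u v] .
  show ?thesis
  proof (cases "snd u = snd v")
    case True
    have "\<bar>gfun E s u - gfun E s v\<bar> \<le> E * dM u v"
      using g_same_level[OF E(1) u v True] dM_same[OF True] by simp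
    moreover have "\<bar>f u - f v\<bar> \<le> dM u v" using f1[OF u v] .
    moreover have "\<bar>(f u - f v) + \<sigma> * (gfun E s u - gfun E s v)\<bar> \<le> \<bar>f u - f v\<bar> + \<bar>gfun E s u - gfun E s v\<bar>"
      using sg[of "gfun E s u - gfun E s v"] abs_triangle_ineq[of "f u - f v" "\<sigma> * (gfun E s u - gfun E s v)"] by linarith
    ultimately show ?thesis by (simp add: algebra_simps)
  next
    case False
    show ?thesis
    proof (cases "snd u = 2 * s")
      case True
      with False show ?thesis using main_pair[OF n s E sE sd f1 flat sig u True v] by simp
    next
      case nu: False
      show ?thesis
      proof (cases "snd v = 2 * s")
        case True
        have "\<bar>(f v - f u) + \<sigma> * (gfun E s v - gfun E s u)\<bar> \<le> (1+E) * dM v u"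
          using main_pair[OF n s E sE sd f1 flat sig v True u] nu by simp
        moreover have "(f v - f u) + \<sigma> * (gfun E s v - gfun E s u) = - ((f u - f v) + \<sigma> * (gfun E s u - gfun E s v))"
          by (simp add: algebra_simps)
        ultimately show ?thesis by (simp add: dM_sym)
      next
        case False
        then have "gfun E s u = 0" "gfun E s v = 0" using nu unfolding gfun_def by auto
        then show ?thesis using f1[OF u v] dn E by (simp add: algebra_simps) (smt (verit) mult_nonneg_nonneg)
      qed
    qed
  qed
qed



lemma g_bound:
  assumes n: "n \<ge> 1" and s: "s = 1/2^(n+1)" and E: "0 < E" "E \<le> 1"
    and u: "u \<in> MM" and v: "v \<in> MM"
  shows "\<bar>gfun E s u - gfun E s v\<bar> \<le> dM u v"
proof -
  have spos: "0 < s" using s by simp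
  have twos: "2 * s = 1/2^n" using s by simp
  have rng: "0 \<le> gfun E s w \<and> gfun E s w \<le> s" if "w \<in> MM" for w
    using MM_coords[OF that] E spos unfolding gfun_def by auto
  show ?thesis
  proof (cases "snd u = snd v")
    case True
    have "E * \<bar>fst u - fst v\<bar> \<le> \<bar>fst u - fst v\<bar>" using E by (intro mult_left_le_one_le) auto
    then show ?thesis using g_same_level[OF E(1) u v True, where s=s] dM_same[OF True] by linarith
  next
    case False
    show ?thesis
    proof (cases "snd u = 2 * s")
      case True
      then have "snd v \<noteq> 1/2^n" using False twos by simp
      from level_gap[OF v n this] have "s \<le> \<bar>2 * s - snd v\<bar>" using twos s by simp
      moreover have "gfun E s v = 0" using False True unfolding gfun_def by auto
      ultimately show ?thesis using rng[OF u] dM_ge_snd[OF u v] True by simp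
    next
      case nu: False
      show ?thesis
      proof (cases "snd v = 2 * s")
        case True
        then have "snd u \<noteq> 1/2^n" using False twos by simp
        from level_gap[OF u n this] have "s \<le> \<bar>2 * s - snd u\<bar>" using twos s by simp
        moreover have "gfun E s u = 0" using nu unfolding gfun_def by auto
        ultimately show ?thesis using rng[OF v] dM_ge_snd[OF u v] True
          by (simp add: abs_minus_commute)
      next
        case False
        then show ?thesis using nu dM_nonneg[OF u v] unfolding gfun_def by auto
      qed
    qed
  qed
qed

lemma pq: "pP \<in> MM" "qQ \<in> MM" "pP \<noteq> qQ"
  unfolding MM_def pP_def qQ_def by auto

lemma SS_sub: "m \<ge> 1 \<Longrightarrow> SS m \<subseteq> MM"
  unfolding MM_def by auto

lemma g_in_YY:
  assumes n: "n \<ge> 1" and s: "s = 1/2^(n+1)" and E: "0 < E" "E \<le> 1" and sE: "s / E \<le> 1/2"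
  shows "gfun E s \<in> YY" and "lipc MM (gfun E s) = 1"
proof -
  define g where "g = gfun E s"
  have spos: "0 < s" using s by simp
  have twos: "2 * s = 1/2^n" using s by simp
  have gb: "\<And>x y. x\<in>MM \<Longrightarrow> y\<in>MM \<Longrightarrow> \<bar>g x - g y\<bar> \<le> 1 * dM x y"
    using g_bound[OF n s E] unfolding g_def by simp
  have gp: "g pP = 0" unfolding g_def gfun_def pP_def using spos by simp
  have gq: "g qQ = 0" unfolding g_def gfun_def qQ_def using spos by simp
  have out: "\<forall>z. z \<notin> MM \<longrightarrow> g z = 0" unfolding g_def gfun_def by auto
  have Lip: "g \<in> Lip0" unfolding Lip0_def using gp out gb by blast
  have ev: "\<forall>\<^sub>F m in sequentially. lipc (SS m) (\<lambda>z. g z - g qQ * hh z) = 0"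
    unfolding eventually_sequentially
  proof (intro exI[of _ "n+1"] allI impI)
    fix m assume m: "n + 1 \<le> m"
    have sub: "SS m \<subseteq> MM" using SS_sub m by auto
    have zero: "g z = 0" if "z \<in> SS m" for z
    proof -
      have "snd z = 1/2^m" using that unfolding SS_def by auto
      moreover have "(2::real)^m \<noteq> 2^n" using m by (simp add: power_inject_exp)
      then have "(1::real)/2^m \<noteq> 1/2^n" by simp
      ultimately show ?thesis unfolding g_def gfun_def using twos by auto
    qed
    have a: "(0, 1/2^m) \<in> SS m" "(1, 1/2^m) \<in> SS m" unfolding SS_def
      by (auto intro!: exI[of _ 0] exI[of _ "2^m"])
    have b: "\<bar>(g x - g qQ * hh x) - (g y - g qQ * hh y)\<bar> \<le> 0 * dM x y" if "x \<in> SS m" "y \<in> SS m" for x y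
      using zero[OF that(1)] zero[OF that(2)] gq by simp
    have le0: "lipc (SS m) (\<lambda>z. g z - g qQ * hh z) \<le> 0"
    proof (rule lipc_le[OF sub a(1) a(2)])
      fix x y assume "x \<in> SS m" "y \<in> SS m"
      then show "\<bar>(g x - g qQ * hh x) - (g y - g qQ * hh y)\<bar> \<le> 0 * dM x y" by (rule b)
    qed simp
    have ge: "\<bar>(g (0, 1/2^m) - g qQ * hh (0, 1/2^m)) - (g (1, 1/2^m) - g qQ * hh (1, 1/2^m))\<bar> / dM (0, 1/2^m) (1, 1/2^m) \<le> lipc (SS m) (\<lambda>z. g z - g qQ * hh z)"
    proof (rule lipc_ge[OF sub a(1) a(2)])
      fix x y assume "x \<in> SS m" "y \<in> SS m"
      then show "\<bar>(g x - g qQ * hh x) - (g y - g qQ * hh y)\<bar> \<le> 0 * dM x y" by (rule b)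
    qed simp
    have "g (0, 1/2^m) = 0" "g (1, 1/2^m) = 0" using zero a by auto
    then have "0 \<le> lipc (SS m) (\<lambda>z. g z - g qQ * hh z)" using ge gq by simp
    note this le0
    then show "lipc (SS m) (\<lambda>z. g z - g qQ * hh z) = 0" by linarith
  qed
  have lim: "(\<lambda>m. lipc (SS m) (\<lambda>z. g z - g qQ * hh z)) \<longlonglongrightarrow> 0"
    by (rule tendsto_eventually[OF ev])
  define u0 where "u0 = (0::real, 2 * s)"
  have u0M: "u0 \<in> MM" unfolding u0_def MM_def SS_def using n twos
    by (auto intro!: bexI[of _ n] exI[of _ 0])
  have gV: "w = u0" if "w \<in> VV" "g w \<noteq> 0" for w
  proof -
    have w: "w \<in> MM" "fst w = 0 \<or> fst w = 1" using that(1) unfolding VV_def by auto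
    have sw: "snd w = 2 * s" and pos: "0 < s - E * fst w" using that(2) w unfolding g_def gfun_def
      by (auto split: if_splits)
    have "E * fst w < s" using pos by simp
    then have "fst w < s / E" using E by (simp add: less_divide_eq mult.commute)
    then have "fst w = 0" using w sE by auto
    then show ?thesis using sw unfolding u0_def by (simp add: prod_eq_iff)
  qed
  have sep: "s \<le> dM w u0" if "w \<in> VV" "w \<noteq> u0" for w
  proof -
    have w: "w \<in> MM" "fst w = 0 \<or> fst w = 1" using that(1) unfolding VV_def by auto
    show ?thesis
    proof (cases "snd w = 2 * s")
      case True
      then have "fst w = 1" using w that(2) unfolding u0_def by (auto simp: prod_eq_iff)
      moreover have "s \<le> 1"
      proof -
        have "(1::real) \<le> 2 * 2^n" using one_le_power[of "2::real" n] by linarith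
        then show ?thesis using s by (simp add: divide_le_eq)
      qed
      ultimately show ?thesis using True unfolding dM_def u0_def by simp
    next
      case False
      then have "snd w \<noteq> 1/2^n" using twos by simp
      from level_gap[OF w(1) n this] have "s \<le> \<bar>2 * s - snd w\<bar>" using twos s by simp
      then show ?thesis using dM_ge_snd[OF w(1) u0M] unfolding u0_def by (simp add: abs_minus_commute)
    qed
  qed
  have VVM: "VV \<subseteq> MM" unfolding VV_def by auto
  have flat: "locally_flat_on VV g"
    unfolding locally_flat_on_def
  proof (intro ballI allI impI)
    fix z e assume z: "z \<in> VV" and e: "(0::real) < e"
    show "\<exists>\<delta>>0. \<forall>x\<in>VV. \<forall>y\<in>VV. x \<noteq> y \<and> dM x z < \<delta> \<and> dM y z < \<delta> \<longrightarrow> \<bar>g x - g y\<bar> \<le> e * dM x y"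
    proof (cases "z = u0")
      case True
      show ?thesis
      proof (intro exI[of _ s] conjI ballI impI)
        show "0 < s" by (rule spos)
        fix x y assume x: "x \<in> VV" and y: "y \<in> VV" and h: "x \<noteq> y \<and> dM x z < s \<and> dM y z < s"
        have "x = u0" using sep[OF x] h True by fastforce
        moreover have "y = u0" using sep[OF y] h True by fastforce
        ultimately show "\<bar>g x - g y\<bar> \<le> e * dM x y" using h by simp
      qed
    next
      case False
      have dpos: "0 < dM z u0" using sep[OF z False] spos by linarith
      show ?thesis
      proof (intro exI[of _ "dM z u0"] conjI ballI impI)
        show "0 < dM z u0" by (rule dpos)
        fix x y assume x: "x \<in> VV" and y: "y \<in> VV" and h: "x \<noteq> y \<and> dM x z < dM z u0 \<and> dM y z < dM z u0"
        have "x \<noteq> u0" using h dM_sym[of u0 z] by auto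
        then have gx: "g x = 0" using gV[OF x] by auto
        have "y \<noteq> u0" using h dM_sym[of u0 z] by auto
        then have gy: "g y = 0" using gV[OF y] by auto
        have "x \<in> MM" "y \<in> MM" using x y VVM by auto
        then have "0 \<le> dM x y" by (rule dM_nonneg)
        then show "\<bar>g x - g y\<bar> \<le> e * dM x y" using gx gy e by simp
      qed
    qed
  qed
  show "gfun E s \<in> YY" using Lip lim flat unfolding YY_def g_def by simp
  have le: "lipc MM g \<le> 1" by (rule lipc_le[OF _ pq gb]) auto
  define w0 where "w0 = (0::real, s)"
  have w0M: "w0 \<in> MM" unfolding w0_def MM_def SS_def using n s
    by (auto intro!: bexI[of _ "n+1"] exI[of _ 0])
  have ne: "u0 \<noteq> w0" unfolding u0_def w0_def using spos by simp
  have "\<bar>g u0 - g w0\<bar> / dM u0 w0 \<le> lipc MM g"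
    by (rule lipc_ge[OF _ u0M w0M ne gb]) auto
  moreover have "g u0 = s" using u0M spos unfolding g_def gfun_def u0_def by simp
  moreover have "g w0 = 0" using spos unfolding g_def gfun_def w0_def by simp
  moreover have "dM u0 w0 = s" unfolding dM_def u0_def w0_def using spos by simp
  ultimately have "1 \<le> lipc MM g" using spos by simp
  then show "lipc MM (gfun E s) = 1" using le unfolding g_def by simp
qed



lemma finite_delta:
  assumes "finite F" "\<forall>f\<in>F. \<exists>d>0. P f d"
    and mono: "\<And>f d d'. P f d \<Longrightarrow> 0 < d' \<Longrightarrow> d' \<le> d \<Longrightarrow> P f d'"
  shows "\<exists>d>(0::real). \<forall>f\<in>F. P f d"
  using assms(1,2)
proof (induction F rule: finite_induct)
  case empty then show ?case by (auto intro: exI[of _ 1])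
next
  case (insert x F)
  obtain d1 where d1: "d1>0" "\<forall>f\<in>F. P f d1" using insert by auto
  obtain d2 where d2: "d2>0" "P x d2" using insert.prems by auto
  show ?case
  proof (intro exI[of _ "min d1 d2"] conjI ballI)
    show "0 < min d1 d2" using d1 d2 by simp
    fix f assume "f \<in> insert x F"
    then show "P f (min d1 d2)" using d1 d2 mono[of _ _ "min d1 d2"] by auto
  qed
qed

theorem proposition2p6:
  shows "almost_square YY (lipc MM)"
  unfolding almost_square_def
proof (intro allI impI)
  fix F :: "(pt \<Rightarrow> real) set" and \<epsilon> :: real
  assume F: "finite F \<and> F \<subseteq> {f \<in> YY. lipc MM f = 1}" and eps: "0 < \<epsilon>"
  define E where "E = min \<epsilon> 1"
  have E: "0 < E" "E \<le> 1" "E \<le> \<epsilon>" using eps unfolding E_def by auto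
  define P where "P = (\<lambda>f d. \<forall>x\<in>VV. \<forall>y\<in>VV. x\<noteq>y \<and> dM x pP < d \<and> dM y pP < d \<longrightarrow> \<bar>f x - f y\<bar> \<le> E * dM x y)"
  have pV: "pP \<in> VV" unfolding VV_def using pq by (simp add: pP_def)
  have "\<forall>f\<in>F. \<exists>d>0. P f d"
  proof
    fix f assume "f \<in> F"
    then have "locally_flat_on VV f" using F unfolding YY_def by auto
    then have h: "\<forall>e>0. \<exists>\<delta>>0. \<forall>x\<in>VV. \<forall>y\<in>VV. x \<noteq> y \<and> dM x pP < \<delta> \<and> dM y pP < \<delta> \<longrightarrow> \<bar>f x - f y\<bar> \<le> e * dM x y"
      unfolding locally_flat_on_def using pV by (rule bspec)
    have "\<exists>\<delta>>0. \<forall>x\<in>VV. \<forall>y\<in>VV. x \<noteq> y \<and> dM x pP < \<delta> \<and> dM y pP < \<delta> \<longrightarrow> \<bar>f x - f y\<bar> \<le> E * dM x y"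
      using spec[OF h, of E] E(1) by (rule mp)
    then show "\<exists>d>0. P f d" unfolding P_def .
  qed
  moreover have mono: "P f d'" if a: "P f d" "0 < d'" "d' \<le> d" for f d d'
    unfolding P_def
  proof (intro ballI impI)
    fix x y assume x: "x \<in> VV" and y: "y \<in> VV" and h: "x \<noteq> y \<and> dM x pP < d' \<and> dM y pP < d'"
    then have "x \<noteq> y \<and> dM x pP < d \<and> dM y pP < d" using a(3) by linarith
    then show "\<bar>f x - f y\<bar> \<le> E * dM x y" using a(1) x y unfolding P_def by blast
  qed
  ultimately obtain \<delta> where d: "\<delta> > 0" "\<forall>f\<in>F. P f \<delta>"
    using finite_delta[of F P] F by blast
  define \<eta> where "\<eta> = min (\<delta> / (2 + 1/E)) (E/2)"
  have "0 < 1/E" using E(1) by simp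
  then have pos2: "0 < 2 + 1/E" by linarith
  then have "0 < \<delta> / (2 + 1/E)" using d(1) by (rule divide_pos_pos[rotated])
  then have etapos: "0 < \<eta>" unfolding \<eta>_def using E by simp
  obtain N where N: "1/\<eta> < 2^N" using real_arch_pow[of "2::real" "1/\<eta>"] by auto
  define n where "n = N + 1"
  define s :: real where "s = 1/2^(n+1)"
  have n: "n \<ge> 1" unfolding n_def by simp
  have spos: "0 < s" unfolding s_def by simp
  have "(2::real)^N \<le> 2^(n+1)" unfolding n_def by (intro power_increasing) auto
  then have "1/\<eta> < 2^(n+1)" using N by simp
  then have "1 < \<eta> * 2^(n+1)" using etapos by (simp add: divide_less_eq mult.commute)
  then have seta: "s < \<eta>" unfolding s_def by (simp add: divide_less_eq mult.commute)
  have s1: "s \<le> E/2" using seta unfolding \<eta>_def by simp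
  have sE: "s / E \<le> 1/2" using s1 E by (simp add: divide_le_eq)
  have "s < \<delta> / (2 + 1/E)" using seta unfolding \<eta>_def by simp
  then have "s * (2 + 1/E) < \<delta>" using pos2 by (simp add: less_divide_eq)
  then have sd: "2 * s + s/E < \<delta>" by (simp add: algebra_simps)
  define g where "g = gfun E s"
  have gY: "g \<in> YY" and g1: "lipc MM g = 1"
    using g_in_YY[OF n s_def E(1,2) sE] unfolding g_def by auto
  show "\<exists>g\<in>YY. lipc MM g = 1 \<and> (\<forall>f\<in>F. lipc MM (\<lambda>z. f z + g z) \<le> 1 + \<epsilon> \<and> lipc MM (\<lambda>z. f z - g z) \<le> 1 + \<epsilon>)"
  proof (intro bexI[OF _ gY] conjI g1 ballI)
    fix f assume fF: "f \<in> F"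
    then have fY: "f \<in> YY" and fn: "lipc MM f = 1" using F by auto
    have f1: "\<And>x y. x\<in>MM \<Longrightarrow> y\<in>MM \<Longrightarrow> \<bar>f x - f y\<bar> \<le> dM x y"
      using norm1_bound fY fn unfolding YY_def by auto
    have flat: "\<forall>x\<in>VV. \<forall>y\<in>VV. x\<noteq>y \<and> dM x pP < \<delta> \<and> dM y pP < \<delta> \<longrightarrow> \<bar>f x - f y\<bar> \<le> E * dM x y"
      using d(2) fF unfolding P_def by auto
    have bnd: "\<bar>(f u + \<sigma> * g u) - (f v + \<sigma> * g v)\<bar> \<le> (1+\<epsilon>) * dM u v"
      if "\<bar>\<sigma>\<bar> \<le> 1" "u \<in> MM" "v \<in> MM" for \<sigma> u v
    proof -
      have "\<bar>(f u - f v) + \<sigma> * (g u - g v)\<bar> \<le> (1+E) * dM u v"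
        using all_pairs[OF n s_def E(1,2) sE sd f1 flat that] unfolding g_def by simp
      moreover have "(1+E) * dM u v \<le> (1+\<epsilon>) * dM u v"
        using E dM_nonneg[OF that(2,3)] by (intro mult_right_mono) auto
      moreover have "(f u + \<sigma> * g u) - (f v + \<sigma> * g v) = (f u - f v) + \<sigma> * (g u - g v)"
        by (simp add: algebra_simps)
      ultimately show ?thesis by simp
    qed
    show "lipc MM (\<lambda>z. f z + g z) \<le> 1 + \<epsilon>"
    proof (rule lipc_le[OF _ pq])
      fix x y assume xy: "x \<in> MM" "y \<in> MM"
      have "\<bar>(f x + 1 * g x) - (f y + 1 * g y)\<bar> \<le> (1+\<epsilon>) * dM x y" using bnd[of 1 x y] xy by simp
      then show "\<bar>(f x + g x) - (f y + g y)\<bar> \<le> (1+\<epsilon>) * dM x y" by simp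
    qed simp
    show "lipc MM (\<lambda>z. f z - g z) \<le> 1 + \<epsilon>"
    proof (rule lipc_le[OF _ pq])
      fix x y assume xy: "x \<in> MM" "y \<in> MM"
      have "\<bar>(f x + (-1) * g x) - (f y + (-1) * g y)\<bar> \<le> (1+\<epsilon>) * dM x y" using bnd[of "-1" x y] xy by simp
      then show "\<bar>(f x - g x) - (f y - g y)\<bar> \<le> (1+\<epsilon>) * dM x y" by simp
    qed simp
  qed
qed


end
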